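(* Let $\pi$ be a rigid $321$-avoiding permutation and $\tau$ a $321$-avoiding permutation. A rigid mapping $f:\pi\to\tau$ is an embedding of $\pi$ into $\tau$ if and only if the problem set $P(f)$ is empty.
   Context: Permutations are identified with their sets of points $(i,\sigma(i))$ with the usual left/right/above/below relations; an embedding is an injective map between point sets preserving the relative horizontal and vertical order of every pair. $x^{\leftarrow}$, $x^{\downarrow}$ denote the points immediately left of / below $x$; $\bot$ means undefined and operators applied to $\bot$ give $\bot$. In a $321$-avoiding permutation $\sigma$, $x$ is upper if some point lies right of and below it, lower if some point lies left of and above it; $U_\sigma,L_\sigma$ are these (disjoint) sets, and $\sigma$ is rigid if $\sigma=U_\sigma\cup L_\sigma$. $T(x)\in\{U,L\}$ is the type of a rigid $x$. For $b\in\{U,L\}$, $y^{\rightarrow}_b$ is the leftmost element of $b_\sigma$ strictly right of $y$ and $y^{\uparrow}_b$ the lowest element of $b_\sigma$ strictly above $y$ ($\bot$ if none). On $U_\sigma$ and on $L_\sigma$, $x\le y$ iff $x=y$ or $y$ is above and right of $x$. A rigid mapping $f:\pi\to\tau$ maps $U_\pi$ into $U_\tau$ and $L_\pi$ into $L_\tau$. A point $x$ of $\pi$ is a problem for $f$ if either $x^{\leftarrow}\neq\bot$ and ($f(x^{\leftarrow})^{\rightarrow}_{T(x)}=\bot$ or $f(x)<f(x^{\leftarrow})^{\rightarrow}_{T(x)}$), or $x^{\downarrow}\neq\bot$ and ($f(x^{\downarrow})^{\uparrow}_{T(x)}=\bot$ or $f(x)<f(x^{\downarrow})^{\uparrow}_{T(x)}$);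 i.e. $f(x)<\max\{f(x^{\leftarrow})^{\rightarrow}_{T(x)},f(x^{\downarrow})^{\uparrow}_{T(x)}\}$, where an undefined bound arising from a defined neighbour counts as exceeding every element. $P(f)$ is the set of problems for $f$. *)

theory Defs
  imports Main
begin

text \<open>A permutation of length n is a bijection of {..<n}; its points are the indices
  i < n, identified with the planar points (i, s i).  Point i is left of j iff i < j,
  and below j iff s i < s j.  Undefined (bottom) is modelled by None.\<close>

definition is_perm :: "nat \<Rightarrow> (nat \<Rightarrow> nat) \<Rightarrow> bool" where
  "is_perm n s \<longleftrightarrow> bij_betw s {..<n} {..<n}"

definition avoids321 :: "nat \<Rightarrow> (nat \<Rightarrow> nat) \<Rightarrow> bool" where
  "avoids321 n s \<longleftrightarrow> \<not> (\<exists>i j k. i < j \<and> j < k \<and> k < n \<and> s i > s j \<and> s j > s k)"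

definition upper_set :: "nat \<Rightarrow> (nat \<Rightarrow> nat) \<Rightarrow> nat set" where
  "upper_set n s = {x. x < n \<and> (\<exists>y<n. x < y \<and> s y < s x)}"

definition lower_set :: "nat \<Rightarrow> (nat \<Rightarrow> nat) \<Rightarrow> nat set" where
  "lower_set n s = {x. x < n \<and> (\<exists>y<n. y < x \<and> s x < s y)}"

definition rigid :: "nat \<Rightarrow> (nat \<Rightarrow> nat) \<Rightarrow> bool" where
  "rigid n s \<longleftrightarrow> {..<n} = upper_set n s \<union> lower_set n s"

datatype ptype = U | L

definition type_set :: "nat \<Rightarrow> (nat \<Rightarrow> nat) \<Rightarrow> ptype \<Rightarrow> nat set" where
  "type_set n s b = (case b of U \<Rightarrow> upper_set n s | L \<Rightarrow> lower_set n s)"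

definition ptype_of :: "nat \<Rightarrow> (nat \<Rightarrow> nat) \<Rightarrow> nat \<Rightarrow> ptype" where
  "ptype_of n s x = (if x \<in> upper_set n s then U else L)"

definition left_nb :: "nat \<Rightarrow> (nat \<Rightarrow> nat) \<Rightarrow> nat \<Rightarrow> nat option" where
  "left_nb n s x = (if 0 < x then Some (x - 1) else None)"

definition below_nb :: "nat \<Rightarrow> (nat \<Rightarrow> nat) \<Rightarrow> nat \<Rightarrow> nat option" where
  "below_nb n s x = (if 0 < s x then Some (inv_into {..<n} s (s x - 1)) else None)"

definition right_b :: "nat \<Rightarrow> (nat \<Rightarrow> nat) \<Rightarrow> ptype \<Rightarrow> nat \<Rightarrow> nat option" where
  "right_b n s b y = (if \<exists>z. z \<in> type_set n s b \<and> y < z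
      then Some (LEAST z. z \<in> type_set n s b \<and> y < z) else None)"

definition up_b :: "nat \<Rightarrow> (nat \<Rightarrow> nat) \<Rightarrow> ptype \<Rightarrow> nat \<Rightarrow> nat option" where
  "up_b n s b y = (if \<exists>z. z \<in> type_set n s b \<and> s y < s z
      then Some (inv_into {..<n} s (LEAST v. \<exists>z. z \<in> type_set n s b \<and> s y < s z \<and> v = s z))
      else None)"

definition plt :: "(nat \<Rightarrow> nat) \<Rightarrow> nat \<Rightarrow> nat \<Rightarrow> bool" where
  "plt s x y \<longleftrightarrow> x \<noteq> y \<and> x < y \<and> s x < s y"

definition rigid_mapping ::
  "nat \<Rightarrow> (nat \<Rightarrow> nat) \<Rightarrow> nat \<Rightarrow> (nat \<Rightarrow> nat) \<Rightarrow> (nat \<Rightarrow> nat) \<Rightarrow> bool" where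
  "rigid_mapping m p n t f \<longleftrightarrow> f ` {..<m} \<subseteq> {..<n}
     \<and> f ` upper_set m p \<subseteq> upper_set n t \<and> f ` lower_set m p \<subseteq> lower_set n t"

definition embedding ::
  "nat \<Rightarrow> (nat \<Rightarrow> nat) \<Rightarrow> nat \<Rightarrow> (nat \<Rightarrow> nat) \<Rightarrow> (nat \<Rightarrow> nat) \<Rightarrow> bool" where
  "embedding m p n t f \<longleftrightarrow> f ` {..<m} \<subseteq> {..<n} \<and> inj_on f {..<m}
     \<and> (\<forall>i<m. \<forall>j<m. (i < j \<longleftrightarrow> f i < f j) \<and> (p i < p j \<longleftrightarrow> t (f i) < t (f j)))"

definition is_problem ::
  "nat \<Rightarrow> (nat \<Rightarrow> nat) \<Rightarrow> nat \<Rightarrow> (nat \<Rightarrow> nat) \<Rightarrow> (nat \<Rightarrow> nat) \<Rightarrow> nat \<Rightarrow> bool" where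
  "is_problem m p n t f x \<longleftrightarrow>
     (case left_nb m p x of None \<Rightarrow> False
      | Some xl \<Rightarrow> (case right_b n t (ptype_of m p x) (f xl) of None \<Rightarrow> True
                    | Some z \<Rightarrow> plt t (f x) z))
   \<or> (case below_nb m p x of None \<Rightarrow> False
      | Some xd \<Rightarrow> (case up_b n t (ptype_of m p x) (f xd) of None \<Rightarrow> True
                    | Some z \<Rightarrow> plt t (f x) z))"

definition problems ::
  "nat \<Rightarrow> (nat \<Rightarrow> nat) \<Rightarrow> nat \<Rightarrow> (nat \<Rightarrow> nat) \<Rightarrow> (nat \<Rightarrow> nat) \<Rightarrow> nat set" where
  "problems m p n t f = {x. x < m \<and> is_problem m p n t f x}"

end

theory Submission
  imports Defs
begin

lemma type_sub: "type_set n t b \<subseteq> {..<n}"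
  by (cases b) (auto simp: type_set_def upper_set_def lower_set_def)

lemma in_type:
  assumes "rigid m p" "rigid_mapping m p n t f" "x < m"
  shows "f x \<in> type_set n t (ptype_of m p x)"
proof -
  have "x \<in> upper_set m p \<union> lower_set m p" using assms(1,3) unfolding rigid_def by auto
  thus ?thesis using assms(2) unfolding rigid_mapping_def type_set_def ptype_of_def by auto
qed

lemma chain:
  assumes "is_perm n t" "avoids321 n t" "u \<in> type_set n t b" "v \<in> type_set n t b" "u < v"
  shows "t u < t v"
proof (rule ccontr)
  assume c: "\<not> t u < t v"
  have un: "u < n" "v < n" using assms(3,4) type_sub by auto
  have "t u \<noteq> t v" using assms(1,5) un unfolding is_perm_def bij_betw_def inj_on_def by auto
  hence c2: "t v < t u" using c by auto
  show False
  proof (cases b)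
    case U
    then obtain w where "w < n" "v < w" "t w < t v" using assms(4) by (auto simp: type_set_def upper_set_def)
    thus False using assms(2,5) c2 unfolding avoids321_def by blast
  next
    case L
    then obtain w where "w < u" "t u < t w" using assms(3) by (auto simp: type_set_def lower_set_def)
    thus False using assms(2,5) c2 un unfolding avoids321_def by blast
  qed
qed

lemma chain2:
  assumes "is_perm n t" "avoids321 n t" "u \<in> type_set n t b" "v \<in> type_set n t b" "t u < t v"
  shows "u < v"
proof (rule ccontr)
  assume "\<not> u < v"
  hence "v < u \<or> u = v" by auto
  thus False using chain[OF assms(1,2,4,3)] assms(5) by auto
qed

lemma step_pos:
  assumes "is_perm n t" "avoids321 n t" "rigid m p" "rigid_mapping m p n t f"
    "problems m p n t f = {}" "0 < x" "x < m"
  shows "f (x - 1) < f x"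
proof -
  let ?b = "ptype_of m p x"
  have np: "\<not> is_problem m p n t f x" using assms(5,7) unfolding problems_def by auto
  have fx: "f x \<in> type_set n t ?b" using in_type assms(3,4,7) by auto
  have ln: "left_nb m p x = Some (x - 1)" using assms(6) by (simp add: left_nb_def)
  show ?thesis
  proof (cases "\<exists>z. z \<in> type_set n t ?b \<and> f (x - 1) < z")
    case False
    hence "right_b n t ?b (f (x - 1)) = None" by (simp add: right_b_def)
    thus ?thesis using np ln unfolding is_problem_def by simp
  next
    case True
    define z where "z = (LEAST z. z \<in> type_set n t ?b \<and> f (x - 1) < z)"
    have rb: "right_b n t ?b (f (x - 1)) = Some z" using True by (simp add: right_b_def z_def)
    have z: "z \<in> type_set n t ?b \<and> f (x - 1) < z" using LeastI_ex[OF True] z_def by simp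
    have "\<not> plt t (f x) z" using np ln rb unfolding is_problem_def by simp
    hence "\<not> f x < z" using chain[OF assms(1,2) fx] z unfolding plt_def by auto
    thus ?thesis using z by simp
  qed
qed

lemma step_val:
  assumes "is_perm m p" "is_perm n t" "avoids321 n t" "rigid m p" "rigid_mapping m p n t f"
    "problems m p n t f = {}" "0 < p x" "x < m"
  shows "t (f (inv_into {..<m} p (p x - 1))) < t (f x)"
proof -
  let ?b = "ptype_of m p x"
  let ?xd = "inv_into {..<m} p (p x - 1)"
  have np: "\<not> is_problem m p n t f x" using assms(6,8) unfolding problems_def by auto
  have fx: "f x \<in> type_set n t ?b" using in_type assms(4,5,8) by auto
  have ln: "below_nb m p x = Some ?xd" using assms(7) by (simp add: below_nb_def)
  show ?thesis
  proof (cases "\<exists>z. z \<in> type_set n t ?b \<and> t (f ?xd) < t z")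
    case False
    hence "up_b n t ?b (f ?xd) = None" by (simp add: up_b_def)
    thus ?thesis using np ln unfolding is_problem_def by simp
  next
    case True
    define v where "v = (LEAST v. \<exists>z. z \<in> type_set n t ?b \<and> t (f ?xd) < t z \<and> v = t z)"
    have ex: "\<exists>v z. z \<in> type_set n t ?b \<and> t (f ?xd) < t z \<and> v = t z" using True by auto
    have rb: "up_b n t ?b (f ?xd) = Some (inv_into {..<n} t v)" using True by (simp add: up_b_def v_def)
    obtain z' where z': "z' \<in> type_set n t ?b" "t (f ?xd) < t z'" "v = t z'"
      using LeastI_ex[OF ex] v_def by auto
    have "z' < n" using z' type_sub by auto
    hence zz: "inv_into {..<n} t v = z'" using z' assms(2) unfolding is_perm_def bij_betw_def
      by (simp add: inv_into_f_f)
    have "\<not> plt t (f x) z'" using np ln rb zz unfolding is_problem_def by simp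
    hence "\<not> t (f x) < t z'" using chain2[OF assms(2,3) fx z'(1)] unfolding plt_def by auto
    thus ?thesis using z' by simp
  qed
qed

theorem corollary1:
  fixes m n :: nat and p t f :: "nat \<Rightarrow> nat"
  assumes "is_perm m p" and "avoids321 m p" and "rigid m p"
    and "is_perm n t" and "avoids321 n t"
    and "rigid_mapping m p n t f"
  shows "embedding m p n t f \<longleftrightarrow> problems m p n t f = {}"
proof
  assume e: "embedding m p n t f"
  have pbij: "bij_betw p {..<m} {..<m}" using assms(1) by (simp add: is_perm_def)
  have tbij: "bij_betw t {..<n} {..<n}" using assms(4) by (simp add: is_perm_def)
  have fr: "\<And>i. i < m \<Longrightarrow> f i < n" using assms(6) unfolding rigid_mapping_def by auto
  have "\<not> is_problem m p n t f x" if x: "x < m" for x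
  proof -
    let ?b = "ptype_of m p x"
    have fx: "f x \<in> type_set n t ?b" using in_type assms(3,6) x by auto
    have A: "\<not> (case left_nb m p x of None \<Rightarrow> False
      | Some xl \<Rightarrow> (case right_b n t ?b (f xl) of None \<Rightarrow> True
                    | Some z \<Rightarrow> plt t (f x) z))"
    proof (cases "0 < x")
      case False thus ?thesis by (simp add: left_nb_def)
    next
      case True
      have "x - 1 < m" "x - 1 < x" using x True by auto
      hence "f (x - 1) < f x" using e x unfolding embedding_def by auto
      hence ex: "\<exists>z. z \<in> type_set n t ?b \<and> f (x - 1) < z" using fx by blast
      have "(LEAST z. z \<in> type_set n t ?b \<and> f (x - 1) < z) \<le> f x"
        using fx \<open>f (x - 1) < f x\<close> by (simp add: Least_le)
      thus ?thesis using True ex by (simp add: left_nb_def right_b_def plt_def)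
    qed
    have B: "\<not> (case below_nb m p x of None \<Rightarrow> False
      | Some xd \<Rightarrow> (case up_b n t ?b (f xd) of None \<Rightarrow> True
                    | Some z \<Rightarrow> plt t (f x) z))"
    proof (cases "0 < p x")
      case False thus ?thesis by (simp add: below_nb_def)
    next
      case True
      let ?xd = "inv_into {..<m} p (p x - 1)"
      have pxm: "p x < m" using pbij x by (auto simp: bij_betw_def)
      have "p x - 1 \<in> p ` {..<m}" using pbij pxm by (simp add: bij_betw_def)
      hence xd: "?xd < m" "p ?xd = p x - 1"
        using inv_into_into[of "p x - 1" p "{..<m}"] f_inv_into_f[of "p x - 1" p "{..<m}"] by auto
      have "p ?xd < p x" using xd True by simp
      hence "t (f ?xd) < t (f x)" using e x xd(1) unfolding embedding_def by blast
      hence ex: "\<exists>z. z \<in> type_set n t ?b \<and> t (f ?xd) < t z" using fx by blast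
      define v where "v = (LEAST v. \<exists>z. z \<in> type_set n t ?b \<and> t (f ?xd) < t z \<and> v = t z)"
      have ex2: "\<exists>v z. z \<in> type_set n t ?b \<and> t (f ?xd) < t z \<and> v = t z" using ex by auto
      obtain z' where z': "z' \<in> type_set n t ?b" "v = t z'"
        using LeastI_ex[OF ex2] v_def by auto
      have "z' < n" using z' type_sub by auto
      hence zz: "t (inv_into {..<n} t v) = v" using z' by (simp add: f_inv_into_f)
      have "v \<le> t (f x)" unfolding v_def
        using fx \<open>t (f ?xd) < t (f x)\<close> by (intro Least_le) blast
      moreover have "below_nb m p x = Some ?xd" using True by (simp add: below_nb_def)
      moreover have "up_b n t ?b (f ?xd) = Some (inv_into {..<n} t v)"
        using ex unfolding up_b_def v_def by simp
      ultimately show ?thesis using zz by (simp add: plt_def)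
    qed
    show ?thesis using A B unfolding is_problem_def by blast
  qed
  thus "problems m p n t f = {}" unfolding problems_def by auto
next
  assume np: "problems m p n t f = {}"
  have pbij: "bij_betw p {..<m} {..<m}" using assms(1) by (simp add: is_perm_def)
  have fr: "\<And>i. i < m \<Longrightarrow> f i < n" using assms(6) unfolding rigid_mapping_def by auto
  let ?q = "inv_into {..<m} p"
  have qm: "\<And>a. a < m \<Longrightarrow> ?q a < m \<and> p (?q a) = a"
    using pbij by (metis bij_betw_def bij_betw_inv_into_right inv_into_into lessThan_iff)
  have mono1: "f i < f j" if "i < j" "j < m" for i j
    using that
  proof (induction j)
    case 0 thus ?case by simp
  next
    case (Suc j)
    have s: "f j < f (Suc j)" using step_pos[OF assms(4,5,3,6) np, of "Suc j"] Suc.prems by simp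
    show ?case
    proof (cases "i = j")
      case True thus ?thesis using s by simp
    next
      case False thus ?thesis using Suc s by simp
    qed
  qed
  have mono2: "t (f (?q a)) < t (f (?q b))" if "a < b" "b < m" for a b
    using that
  proof (induction b)
    case 0 thus ?case by simp
  next
    case (Suc b)
    have "t (f (?q (p (?q (Suc b)) - 1))) < t (f (?q (Suc b)))"
      using step_val[OF assms(1,4,5,3,6) np, of "?q (Suc b)"] qm[of "Suc b"] Suc.prems by simp
    hence s: "t (f (?q b)) < t (f (?q (Suc b)))" using qm[of "Suc b"] Suc.prems by simp
    show ?case
    proof (cases "a = b")
      case True thus ?thesis using s by simp
    next
      case False thus ?thesis using Suc s by simp
    qed
  qed
  have qp: "\<And>i. i < m \<Longrightarrow> ?q (p i) = i" using pbij by (simp add: bij_betw_def inv_into_f_f)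
  have pm: "\<And>i. i < m \<Longrightarrow> p i < m" using pbij by (auto simp: bij_betw_def)
  have o1: "i < j \<longleftrightarrow> f i < f j" if "i < m" "j < m" for i j
    using mono1 that by (metis less_asym linorder_neqE_nat)
  have o2: "p i < p j \<longleftrightarrow> t (f i) < t (f j)" if "i < m" "j < m" for i j
  proof -
    have "p i < p j \<Longrightarrow> t (f i) < t (f j)" using mono2[of "p i" "p j"] that qp pm by simp
    moreover have "p j < p i \<Longrightarrow> t (f j) < t (f i)" using mono2[of "p j" "p i"] that qp pm by simp
    moreover have "p i = p j \<Longrightarrow> i = j" using qp that by metis
    ultimately show ?thesis by (metis less_asym linorder_neqE_nat)
  qed
  have inj: "inj_on f {..<m}"
    unfolding inj_on_def using o1 by (metis lessThan_iff less_irrefl linorder_neqE_nat)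
  show "embedding m p n t f" unfolding embedding_def using fr inj o1 o2 by auto
qed

end
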